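(* Let $n\ge0$ be an integer, $N=2^{n+1}$, and consider the 1D-Tree over the uniform dataset $\{0,\dots,N-1\}$ (described in the context). Let $s$ be a real number with $1<s\le N$, $\kappa=\lfloor\log_2(N/s)\rfloor$ (so $2^{n-\kappa}<s\le2^{n-\kappa+1}$), and $Q=[x,x+s)$ with $x\in[0,N-s]$. Then $\mathrm{level}_{\mathrm{Tree}}(Q)\in\{0,\dots,\kappa\}$, and: (i) for $\ell\in\{0,\dots,\kappa-1\}$, $\mathrm{level}_{\mathrm{Tree}}(Q)=\ell$ if $x\in\bigl(m2^{n-\ell}-s,\ m2^{n-\ell}\bigr)$ for some odd $m\in\{1,3,\dots,2^{\ell+1}-1\}$ (that is, if $Q$ straddles a primitive boundary point of level $\ell+1$ but no primitive boundary point of level $\le\ell$); (ii) $\mathrm{level}_{\mathrm{Tree}}(Q)=\kappa$ if $x\in\bigl[m2^{n-\kappa+1},\ (m+1)2^{n-\kappa+1}-s\bigr]$ for some $m\in\{0,1,\dots,2^\kappa-1\}$.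
   Context: The 1D-Tree over $\mathcal{D}=\{0,\dots,N-1\}\subset[0,N)$ has levels $\ell=0,\dots,n+1$; its level-$\ell$ nodes are the $2^\ell$ intervals $[m2^{n-\ell+1},(m+1)2^{n-\ell+1})$, $m=0,\dots,2^\ell-1$; each node's children are its left and right halves. SRC-search returns the deepest node whose interval contains $Q$; $\mathrm{level}_{\mathrm{Tree}}(Q)$ is its level. A primitive boundary point of level $\ell$ is the point splitting a level-$(\ell-1)$ node into its two children, i.e. an odd multiple of $2^{n-\ell+1}$. $Q=[x,x+s)$ straddles a point $p$ if $x<p<x+s$. *)

theory Defs
  imports Complex_Main
begin

text \<open>1D-Tree over the dataset {0,...,N-1}, N = 2^(n+1). The level-l nodes (l = 0..n+1)
  are the intervals [m 2^(n-l+1), (m+1) 2^(n-l+1)), m = 0..2^l-1.\<close>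

definition tree_node :: "nat \<Rightarrow> nat \<Rightarrow> nat \<Rightarrow> real set" where
  "tree_node n l m = {real m * 2 ^ (n + 1 - l) ..< real (m + 1) * 2 ^ (n + 1 - l)}"

definition query :: "real \<Rightarrow> real \<Rightarrow> real set" where
  "query x s = {x ..< x + s}"

definition node_contains_at_level :: "nat \<Rightarrow> nat \<Rightarrow> real \<Rightarrow> real \<Rightarrow> bool" where
  "node_contains_at_level n l x s \<longleftrightarrow>
     l \<le> n + 1 \<and> (\<exists>m < 2 ^ l. query x s \<subseteq> tree_node n l m)"

text \<open>SRC-search returns the deepest node containing Q; level_Tree is its level.\<close>
definition level_Tree :: "nat \<Rightarrow> real \<Rightarrow> real \<Rightarrow> nat" where
  "level_Tree n x s = (GREATEST l. node_contains_at_level n l x s)"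

end

theory Submission
  imports Defs
begin

lemma contains_size:
  assumes "node_contains_at_level n l x s"
  shows "s \<le> 2 ^ (n + 1 - l)"
proof -
  from assms obtain m where "query x s \<subseteq> tree_node n l m" "l \<le> n+1"
    unfolding node_contains_at_level_def by auto
  moreover have "s > 0 \<Longrightarrow> x \<in> query x s" "s > 0 \<Longrightarrow> x + s - (s/2) \<in> query x s" 
    unfolding query_def by auto
  ultimately show ?thesis
  proof (cases "s > 0")
    case True
    have A: "{x..<x+s} \<subseteq> {real m * 2 ^ (n + 1 - l) ..< real (m + 1) * 2 ^ (n + 1 - l)}"
      using \<open>query x s \<subseteq> tree_node n l m\<close> unfolding query_def tree_node_def by auto
    have "x \<ge> real m * 2 ^ (n + 1 - l)" using A True by auto
    moreover have "x + s \<le> real (m + 1) * 2 ^ (n + 1 - l)"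
    proof (rule ccontr)
      assume "\<not> ?thesis"
      define y where "y = max x (real (m + 1) * 2 ^ (n + 1 - l))"
      have "y \<in> {x..<x+s}" using True \<open>\<not> _\<close> unfolding y_def by auto
      thus False using A unfolding y_def by auto
    qed
    ultimately show ?thesis by (simp add: algebra_simps)
  qed (auto intro: order_trans[of _ 0])
qed

lemma contains_of_bounds:
  assumes "l \<le> n + 1" "(k::nat) < 2 ^ l" "real k * 2 ^ (n + 1 - l) \<le> x"
    "x + s \<le> real (k + 1) * 2 ^ (n + 1 - l)"
  shows "node_contains_at_level n l x s"
  unfolding node_contains_at_level_def query_def tree_node_def using assms by auto

theorem lemma3:
  fixes n \<kappa> :: nat and s x :: real
  assumes "1 < s" and "s \<le> 2 ^ (n + 1)"
    and "\<kappa> = nat \<lfloor>log 2 (2 ^ (n + 1) / s)\<rfloor>"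
    and "0 \<le> x" and "x \<le> 2 ^ (n + 1) - s"
  shows "level_Tree n x s \<le> \<kappa>
    \<and> (\<forall>l < \<kappa>. \<forall>m::nat. odd m \<and> m \<le> 2 ^ (l + 1) - 1
          \<and> real m * 2 ^ (n - l) - s < x \<and> x < real m * 2 ^ (n - l)
          \<longrightarrow> level_Tree n x s = l)
    \<and> (\<forall>m::nat. m \<le> 2 ^ \<kappa> - 1
          \<and> real m * 2 ^ (n + 1 - \<kappa>) \<le> x \<and> x \<le> real (m + 1) * 2 ^ (n + 1 - \<kappa>) - s
          \<longrightarrow> level_Tree n x s = \<kappa>)"
proof -
  define r where "r = 2 ^ (n + 1) / s"
  have r1: "1 \<le> r" using assms(1,2) unfolding r_def by simp
  have lg0: "0 \<le> log 2 r" using r1 by simp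
  have k1: "real \<kappa> \<le> log 2 r" using assms(3) lg0 unfolding r_def by linarith
  have k2: "log 2 r < real \<kappa> + 1" using assms(3) lg0 unfolding r_def by linarith
  have "2 powr real \<kappa> \<le> 2 powr log 2 r" using k1 by simp
  hence p1: "2 ^ \<kappa> \<le> r" using r1 by (simp add: powr_realpow)
  have "2 powr log 2 r < 2 powr (real \<kappa> + 1)" using k2 by simp
  moreover have "2 powr log 2 r = r" using r1 by simp
  moreover have "(2::real) powr (real \<kappa> + 1) = 2 ^ (\<kappa> + 1)"
    using powr_realpow[of 2 "\<kappa>+1"] by (simp add: add.commute)
  ultimately have p2: "r < 2 ^ (\<kappa> + 1)" by simp
  have "(2::real) ^ \<kappa> < 2 ^ (n+1)" proof -
    have "r < 2 ^ (n+1)" unfolding r_def using assms(1) by (simp add: divide_less_eq)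
    thus ?thesis using p1 by linarith
  qed
  hence "\<kappa> < n + 1" using power_strict_increasing_iff[of "2::real" \<kappa> "n+1"] by simp
  hence kn: "\<kappa> \<le> n" by simp
  have e1: "(2::real) ^ (n + 1) = 2 ^ (n + 1 - \<kappa>) * 2 ^ \<kappa>"
    using kn by (simp flip: power_add)
  have e2: "(2::real) ^ (n + 1) = 2 ^ (n - \<kappa>) * 2 ^ (\<kappa> + 1)"
    using kn by (simp flip: power_add)
  have sup: "s \<le> 2 ^ (n + 1 - \<kappa>)"
    using p1 assms(1) unfolding r_def e1 by (simp add: field_simps)
  have slo: "2 ^ (n - \<kappa>) < s"
    using p2 assms(1) unfolding r_def e2 by (simp add: field_simps)
  have upper: "l \<le> \<kappa>" if "node_contains_at_level n l x s" for l
  proof (rule ccontr)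
    assume "\<not> l \<le> \<kappa>"
    have "l \<le> n + 1" using that unfolding node_contains_at_level_def by simp
    have "(2::real) ^ (n + 1 - l) \<le> 2 ^ (n - \<kappa>)"
      by (rule power_increasing) (use \<open>\<not> l \<le> \<kappa>\<close> in auto)
    thus False using contains_size[OF that] slo by linarith
  qed
  have c0: "node_contains_at_level n 0 x s"
    by (rule contains_of_bounds[where k=0]) (use assms in auto)
  have bnd: "\<forall>y. node_contains_at_level n y x s \<longrightarrow> y \<le> \<kappa>" using upper by blast
  have G: "node_contains_at_level n (level_Tree n x s) x s"
    unfolding level_Tree_def by (rule GreatestI_nat[where P="\<lambda>l. node_contains_at_level n l x s", OF c0 upper])
  have eq: "level_Tree n x s = l" if "node_contains_at_level n l x s"
     "\<And>l'. node_contains_at_level n l' x s \<Longrightarrow> l' \<le> l" for l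
    unfolding level_Tree_def using that by (intro Greatest_equality) auto
  have part1: "level_Tree n x s \<le> \<kappa>" using upper[OF G] .
  have part3: "\<forall>m::nat. m \<le> 2 ^ \<kappa> - 1
          \<and> real m * 2 ^ (n + 1 - \<kappa>) \<le> x \<and> x \<le> real (m + 1) * 2 ^ (n + 1 - \<kappa>) - s
          \<longrightarrow> level_Tree n x s = \<kappa>"
  proof (intro allI impI)
    fix m :: nat
    assume h: "m \<le> 2 ^ \<kappa> - 1
          \<and> real m * 2 ^ (n + 1 - \<kappa>) \<le> x \<and> x \<le> real (m + 1) * 2 ^ (n + 1 - \<kappa>) - s"
    have "(0::nat) < 2 ^ \<kappa>" by simp
    hence "m < 2 ^ \<kappa>" using h by linarith
    hence "node_contains_at_level n \<kappa> x s"
      using h kn by (intro contains_of_bounds[where k=m]) auto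
    thus "level_Tree n x s = \<kappa>" using eq upper by blast
  qed
  have part2: "\<forall>l < \<kappa>. \<forall>m::nat. odd m \<and> m \<le> 2 ^ (l + 1) - 1
          \<and> real m * 2 ^ (n - l) - s < x \<and> x < real m * 2 ^ (n - l)
          \<longrightarrow> level_Tree n x s = l"
  proof (intro allI impI)
    fix l m :: nat
    assume lk: "l < \<kappa>" and h: "odd m \<and> m \<le> 2 ^ (l + 1) - 1
          \<and> real m * 2 ^ (n - l) - s < x \<and> x < real m * 2 ^ (n - l)"
    obtain k where mk: "m = 2 * k + 1" using h oddE by blast
    have "(0::nat) < 2 ^ (l+1)" by simp
    hence "m < 2 ^ (l+1)" using h by linarith
    hence kl: "k < 2 ^ l" using mk by simp
    have ee: "(2::real) ^ (n + 1 - l) = 2 * 2 ^ (n - l)" proof -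
      have "n + 1 - l = Suc (n - l)" using lk kn by simp
      thus ?thesis by simp
    qed
    have "(2::real) ^ (n + 1 - \<kappa>) \<le> 2 ^ (n - l)"
      by (rule power_increasing) (use lk in auto)
    hence sl: "s \<le> 2 ^ (n - l)" using sup by linarith
    have "node_contains_at_level n l x s"
    proof (rule contains_of_bounds[where k=k])
      show "l \<le> n + 1" using lk kn by simp
      show "k < 2 ^ l" by fact
      show "real k * 2 ^ (n + 1 - l) \<le> x" using h sl unfolding ee mk by (simp add: algebra_simps)
      show "x + s \<le> real (k + 1) * 2 ^ (n + 1 - l)" using h sl unfolding ee mk by (simp add: algebra_simps)
    qed
    moreover have "l' \<le> l" if "node_contains_at_level n l' x s" for l'
    proof (rule ccontr)
      assume "\<not> l' \<le> l"
      from that obtain m' where m': "query x s \<subseteq> tree_node n l' m'" "l' \<le> n+1"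
        unfolding node_contains_at_level_def by auto
      define e where "e = n + 1 - l'"
      define j where "j = m * 2 ^ (l' - l - 1)"
      have pj: "real m * 2 ^ (n - l) = real j * 2 ^ e"
      proof -
        have "n - l = (l' - l - 1) + e" unfolding e_def using \<open>\<not> l' \<le> l\<close> m'(2) by simp
        hence "(2::real) ^ (n - l) = 2 ^ (l' - l - 1) * 2 ^ e" by (simp add: power_add)
        thus ?thesis unfolding j_def by simp
      qed
      have A: "{x..<x+s} \<subseteq> {real m' * 2 ^ e ..< real (m' + 1) * 2 ^ e}"
        using m'(1) unfolding query_def tree_node_def e_def by auto
      have "x \<in> {x..<x+s}" using assms(1) by simp
      hence a1: "real m' * 2 ^ e \<le> x" using A by auto
      have "real j * 2 ^ e \<in> {x..<x+s}" using h pj by auto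
      hence "real j * 2 ^ e \<in> {real m' * 2 ^ e ..< real (m' + 1) * 2 ^ e}" using A by blast
      hence a2: "real j * 2 ^ e < real (m' + 1) * 2 ^ e" by (metis atLeastLessThan_iff)
      have "real m' * 2 ^ e < real j * 2 ^ e" using a1 h pj by linarith
      hence b1: "real m' < real j" by (rule mult_right_less_imp_less) simp
      have b2: "real j < real (m' + 1)" by (rule mult_right_less_imp_less[OF a2]) simp
      have "m' < j" "j < m' + 1" using b1 b2 by simp_all
      then show False by simp
    qed
    ultimately show "level_Tree n x s = l" using eq by blast
  qed
  show ?thesis using part1 part2 part3 by blast
qed

end
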